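(* Let $\mathcal C=\mathcal C(I,A,(\rho_i)_{i\in I},(C^a)_{a\in A})$ be a connected Cartan scheme and $\mathcal R=\mathcal R(\mathcal C,(R^a)_{a\in A})$ a root system of type $\mathcal C$. Let $a\in A$ and $i,j\in I$ with $i\neq j$. If $c^a_{ij}=0$, then $c^a_{jl}=c^{\rho_i(a)}_{jl}$ for all $l\in I$.
   Context: Let $I$ be a nonempty finite set and $\{\alpha_i\mid i\in I\}$ the standard basis of $\mathbb Z^I$; $\mathbb N_0=\{0,1,2,\dots\}$. A generalized Cartan matrix is $C=(c_{ij})_{i,j\in I}\in\mathbb Z^{I\times I}$ with $c_{ii}=2$, $c_{jk}\le0$ for $j\ne k$, and $c_{ij}=0\Rightarrow c_{ji}=0$. A Cartan scheme $\mathcal C=\mathcal C(I,A,(\rho_i)_{i\in I},(C^a)_{a\in A})$ consists of a nonempty set $A$, maps $\rho_i:A\to A$ and generalized Cartan matrices $C^a=(c^a_{jk})_{j,k\in I}$ such that (C1) $\rho_i^2=\mathrm{id}$ and (C2) $c^a_{ij}=c^{\rho_i(a)}_{ij}$ for all $a\in A$, $i,j\in I$. It is connected if the group generated by the $\rho_i$ acts transitively on $A$. For $i\in I$, $a\in A$ let $\sigma_i^a\in\mathrm{Aut}(\mathbb Z^I)$, $\sigma_i^a(\alpha_j)=\alpha_j-c^a_{ij}\alpha_i$. A root system of type $\mathcal C$ is a family $\mathcal R=\mathcal R(\mathcal C,(R^a)_{a\in A})$ of subsets $R^a\subset\mathbb Z^I$ such that, writing $R^a_+=R^a\cap\mathbb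 N_0^I$ and $m^a_{i,j}=|R^a\cap(\mathbb N_0\alpha_i+\mathbb N_0\alpha_j)|$, for all $a\in A$, $i,j\in I$: (R1) $R^a=R^a_+\cup(-R^a_+)$; (R2) $R^a\cap\mathbb Z\alpha_i=\{\alpha_i,-\alpha_i\}$; (R3) $\sigma_i^a(R^a)=R^{\rho_i(a)}$; (R4) if $i\neq j$ and $m^a_{i,j}$ is finite then $(\rho_i\rho_j)^{m^a_{i,j}}(a)=a$. *)

theory Defs
  imports Main
begin

text \<open>Index set I is the finite type 'i (nonempty automatically); Z^I is 'i => int;
  the object set A is the type 'a (nonempty automatically).\<close>

definition alpha :: "'i \<Rightarrow> ('i \<Rightarrow> int)" where
  "alpha i = (\<lambda>k. if k = i then 1 else 0)"

definition gen_cartan_matrix :: "('i::finite \<Rightarrow> 'i \<Rightarrow> int) \<Rightarrow> bool" where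
  "gen_cartan_matrix M \<longleftrightarrow>
     (\<forall>i. M i i = 2) \<and> (\<forall>j k. j \<noteq> k \<longrightarrow> M j k \<le> 0) \<and> (\<forall>i j. M i j = 0 \<longrightarrow> M j i = 0)"

definition cartan_scheme :: "('i::finite \<Rightarrow> 'a \<Rightarrow> 'a) \<Rightarrow> ('a \<Rightarrow> 'i \<Rightarrow> 'i \<Rightarrow> int) \<Rightarrow> bool" where
  "cartan_scheme rho C \<longleftrightarrow>
     (\<forall>a. gen_cartan_matrix (C a)) \<and>
     (\<forall>i a. rho i (rho i a) = a) \<and>
     (\<forall>a i j. C a i j = C (rho i a) i j)"

text \<open>Connected: the group generated by the rho_i acts transitively; since the rho_i are
  involutions, the group elements are exactly the finite products (words) of the rho_i.\<close>
definition connected_cs :: "('i::finite \<Rightarrow> 'a \<Rightarrow> 'a) \<Rightarrow> bool" where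
  "connected_cs rho \<longleftrightarrow> (\<forall>a b. \<exists>w :: 'i list. foldr rho w a = b)"

text \<open>sigma_i^a(v) = v - (sum_j c^a_ij v_j) alpha_i, the linear map with
  sigma_i^a(alpha_j) = alpha_j - c^a_ij alpha_i.\<close>
definition sigma :: "('a \<Rightarrow> 'i \<Rightarrow> 'i \<Rightarrow> int) \<Rightarrow> 'i::finite \<Rightarrow> 'a \<Rightarrow> ('i \<Rightarrow> int) \<Rightarrow> ('i \<Rightarrow> int)" where
  "sigma C i a v = (\<lambda>k. v k - (\<Sum>j\<in>UNIV. C a i j * v j) * alpha i k)"

definition pos_roots :: "('a \<Rightarrow> ('i \<Rightarrow> int) set) \<Rightarrow> 'a \<Rightarrow> ('i \<Rightarrow> int) set" where
  "pos_roots R a = R a \<inter> {v. \<forall>k. 0 \<le> v k}"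

definition rank2_roots :: "('a \<Rightarrow> ('i \<Rightarrow> int) set) \<Rightarrow> 'a \<Rightarrow> 'i \<Rightarrow> 'i \<Rightarrow> ('i \<Rightarrow> int) set" where
  "rank2_roots R a i j =
     R a \<inter> {v. \<exists>m n :: nat. v = (\<lambda>k. int m * alpha i k + int n * alpha j k)}"

definition root_system ::
  "('i::finite \<Rightarrow> 'a \<Rightarrow> 'a) \<Rightarrow> ('a \<Rightarrow> 'i \<Rightarrow> 'i \<Rightarrow> int) \<Rightarrow> ('a \<Rightarrow> ('i \<Rightarrow> int) set) \<Rightarrow> bool" where
  "root_system rho C R \<longleftrightarrow>
     cartan_scheme rho C \<and>
     (\<forall>a. R a = pos_roots R a \<union> uminus ` pos_roots R a) \<and>
     (\<forall>a i. R a \<inter> {v. \<exists>z::int. v = (\<lambda>k. z * alpha i k)} = {alpha i, - alpha i}) \<and>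
     (\<forall>a i. sigma C i a ` R a = R (rho i a)) \<and>
     (\<forall>a i j. i \<noteq> j \<and> finite (rank2_roots R a i j) \<longrightarrow>
        ((rho i \<circ> rho j) ^^ card (rank2_roots R a i j)) a = a)"

end

theory Submission
  imports Defs
begin

lemma sum_alpha: fixes f :: "'i::finite \<Rightarrow> int" shows "(\<Sum>m\<in>UNIV. f m * alpha p m) = (f p :: int)"
proof -
  have "(\<Sum>m\<in>UNIV. f m * alpha p m) = (\<Sum>m\<in>UNIV. if m = p then f m else 0)"
    by (rule sum.cong) (auto simp: alpha_def)
  also have "\<dots> = f p" by (subst sum.delta) auto
  finally show ?thesis .
qed

lemma sum3:
  fixes f :: "'i::finite \<Rightarrow> int"
  shows "(\<Sum>m\<in>UNIV. f m * (x * alpha p m + y * alpha q m + z * alpha r m))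
       = x * f p + y * f q + z * f r"
proof -
  have "(\<Sum>m\<in>UNIV. f m * (x * alpha p m + y * alpha q m + z * alpha r m))
      = x * (\<Sum>m\<in>UNIV. f m * alpha p m) + y * (\<Sum>m\<in>UNIV. f m * alpha q m)
        + z * (\<Sum>m\<in>UNIV. f m * alpha r m)"
    by (simp add: algebra_simps sum.distrib sum_distrib_left)
  then show ?thesis by (simp add: sum_alpha)
qed

lemma keyineq:
  fixes rho :: "'i::finite \<Rightarrow> 'a \<Rightarrow> 'a"
    and C :: "'a \<Rightarrow> 'i \<Rightarrow> 'i \<Rightarrow> int"
    and R :: "'a \<Rightarrow> ('i \<Rightarrow> int) set"
  assumes rs: "root_system rho C R" and ij: "i \<noteq> j" and li: "l \<noteq> i" and lj: "l \<noteq> j"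
    and c0: "C a i j = 0"
  shows "C a j l \<le> C (rho i a) j l"
proof -
  have cs: "cartan_scheme rho C" using rs by (simp add: root_system_def)
  have inv: "\<And>k x. rho k (rho k x) = x" using cs by (simp add: cartan_scheme_def)
  have C2: "\<And>x k m. C (rho k x) k m = C x k m" using cs by (simp add: cartan_scheme_def)
  have gcm: "\<And>x. gen_cartan_matrix (C x)" using cs by (simp add: cartan_scheme_def)
  have sym0: "\<And>x p q. C x p q = 0 \<Longrightarrow> C x q p = 0"
    using gcm by (simp add: gen_cartan_matrix_def)
  have diag: "\<And>x p. C x p p = 2" using gcm by (simp add: gen_cartan_matrix_def)
  have R2: "\<And>x k. alpha k \<in> R x"
  proof -
    fix x k
    have "R x \<inter> {v. \<exists>z::int. v = (\<lambda>m. z * alpha k m)} = {alpha k, - alpha k}"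
      using rs unfolding root_system_def by (elim conjE) (rule spec2)
    then show "alpha k \<in> R x" by blast
  qed
  have R3: "\<And>x k v. v \<in> R x \<Longrightarrow> sigma C k x v \<in> R (rho k x)"
  proof -
    fix x k v assume "v \<in> R x"
    moreover have "sigma C k x ` R x = R (rho k x)"
      using rs unfolding root_system_def by (elim conjE) (rule spec2)
    ultimately show "sigma C k x v \<in> R (rho k x)" by blast
  qed
  have R1: "\<And>x. R x = pos_roots R x \<union> uminus ` pos_roots R x"
    using rs unfolding root_system_def by (elim conjE) (rule spec)
  define b where "b = rho i a"
  have cb0: "C b i j = 0" using c0 C2 b_def by simp
  have cbil: "C b i l = C a i l" using C2 b_def by simp
  have caji: "C a j i = 0" using sym0 c0 by simp
  define v1 where "v1 = sigma C j (rho j b) (alpha l)"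
  have v1R: "v1 \<in> R b" using R3[OF R2, of j "rho j b" l] inv v1_def by simp
  have v1e: "v1 = (\<lambda>k. 1 * alpha l k + (- C b j l) * alpha j k + 0 * alpha i k)"
    unfolding v1_def sigma_def using sum_alpha[of "C (rho j b) j" l] C2[of j b l]
    by (auto simp: algebra_simps)
  define v2 where "v2 = sigma C i b v1"
  have v2R: "v2 \<in> R a" using R3[OF v1R, of i] inv b_def v2_def by simp
  have v2e: "v2 = (\<lambda>k. 1 * alpha l k + (- C b j l) * alpha j k + (- C a i l) * alpha i k)"
    unfolding v2_def sigma_def
    apply (subst (2) v1e)
    apply (subst sum3)
    using cb0 cbil v1e by (auto simp: algebra_simps)
  define w where "w = sigma C j a v2"
  have wR: "w \<in> R (rho j a)" using R3[OF v2R] w_def by simp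
  have S: "(\<Sum>m\<in>UNIV. C a j m * v2 m) = C a j l - 2 * C b j l"
    apply (subst v2e) apply (subst sum3) using caji diag by simp
  have wl: "w l = 1" unfolding w_def sigma_def using lj li
    by (simp add: v2e alpha_def)
  have wj: "w j = C b j l - C a j l" unfolding w_def sigma_def S
    using lj ij by (simp add: v2e alpha_def)
  have "w \<in> pos_roots R (rho j a)"
  proof (rule ccontr)
    assume "w \<notin> pos_roots R (rho j a)"
    then have "w \<in> uminus ` pos_roots R (rho j a)" using wR R1 by blast
    then obtain u where "u \<in> pos_roots R (rho j a)" "w = - u" by blast
    then have "u l \<ge> 0" "w l = - u l" by (auto simp: pos_roots_def)
    then show False using wl by simp
  qed
  then have "w j \<ge> 0" by (simp add: pos_roots_def)
  then show ?thesis using wj b_def by simp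
qed

theorem lemma4p5:
  fixes rho :: "'i::finite \<Rightarrow> 'a \<Rightarrow> 'a"
    and C :: "'a \<Rightarrow> 'i \<Rightarrow> 'i \<Rightarrow> int"
    and R :: "'a \<Rightarrow> ('i \<Rightarrow> int) set"
  assumes "cartan_scheme rho C"
    and "connected_cs rho"
    and "root_system rho C R"
    and "i \<noteq> j"
    and "C a i j = 0"
  shows "\<forall>l. C a j l = C (rho i a) j l"
proof
  fix l
  have cs: "cartan_scheme rho C" by fact
  have inv: "\<And>k x. rho k (rho k x) = x" using cs by (simp add: cartan_scheme_def)
  have C2: "\<And>x k m. C (rho k x) k m = C x k m" using cs by (simp add: cartan_scheme_def)
  have gcm: "\<And>x. gen_cartan_matrix (C x)" using cs by (simp add: cartan_scheme_def)
  have sym0: "\<And>x p q. C x p q = 0 \<Longrightarrow> C x q p = 0"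
    using gcm by (simp add: gen_cartan_matrix_def)
  have diag: "\<And>x p. C x p p = 2" using gcm by (simp add: gen_cartan_matrix_def)
  have cb0: "C (rho i a) i j = 0" using assms(5) C2 by simp
  show "C a j l = C (rho i a) j l"
  proof (cases "l = j")
    case True then show ?thesis using diag by simp
  next
    case lj: False
    show ?thesis
    proof (cases "l = i")
      case True then show ?thesis using sym0 assms(5) cb0 by simp
    next
      case li: False
      have 1: "C a j l \<le> C (rho i a) j l"
        using keyineq[OF assms(3) assms(4) li lj assms(5)] .
      have 2: "C (rho i a) j l \<le> C (rho i (rho i a)) j l"
        using keyineq[OF assms(3) assms(4) li lj cb0] .
      show ?thesis using 1 2 inv by simp
    qed
  qed
qed

end
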